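(* Let $G=(V,E)$ be a connected graph with $|E|=\Omega(|V|^2)$. Then $Z_c(G)=\Theta(|V|)$. That is, for every constant $c>0$ there is a constant $c'>0$ such that every connected graph $G=(V,E)$ with $|E|\geq c|V|^2$ satisfies $Z_c(G)\geq c'|V|$ (and trivially $Z_c(G)\leq |V|$).
   Context: Zero forcing: given a graph $G$ and a set $S$ of initially colored vertices, if a colored vertex $u$ has exactly one uncolored neighbor $v$, then $v$ becomes colored. $S$ is a zero forcing set if repeated application colors all vertices. A connected forcing set is a zero forcing set $S$ such that the induced subgraph $G[S]$ is connected; $Z_c(G)$, the connected forcing number, is the minimum cardinality of a connected forcing set (defined for connected graphs, since disconnected graphs have no connected forcing set). The asymptotic notation refers to families of graphs whose number of vertices tends to infinity. *)

theory Defs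
  imports Complex_Main
begin

definition simple_graph :: "'a set \<Rightarrow> ('a \<Rightarrow> 'a \<Rightarrow> bool) \<Rightarrow> bool" where
  "simple_graph V E \<longleftrightarrow> finite V \<and>
     (\<forall>u v. E u v \<longrightarrow> u \<in> V \<and> v \<in> V \<and> u \<noteq> v \<and> E v u)"

definition num_edges :: "('a \<Rightarrow> 'a \<Rightarrow> bool) \<Rightarrow> nat" where
  "num_edges E = card {{u, v} | u v. E u v}"

definition connected_on :: "'a set \<Rightarrow> ('a \<Rightarrow> 'a \<Rightarrow> bool) \<Rightarrow> bool" where
  "connected_on S E \<longleftrightarrow> S \<noteq> {} \<and>
     (\<forall>x\<in>S. \<forall>y\<in>S. (\<lambda>a b. a \<in> S \<and> b \<in> S \<and> E a b)\<^sup>*\<^sup>* x y)"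

definition connected_graph :: "'a set \<Rightarrow> ('a \<Rightarrow> 'a \<Rightarrow> bool) \<Rightarrow> bool" where
  "connected_graph V E \<longleftrightarrow> connected_on V E"

definition force_step :: "'a set \<Rightarrow> ('a \<Rightarrow> 'a \<Rightarrow> bool) \<Rightarrow> 'a set \<Rightarrow> 'a set \<Rightarrow> bool" where
  "force_step V E C C' \<longleftrightarrow> (\<exists>u v. u \<in> C \<and> v \<in> V \<and> v \<notin> C \<and> E u v \<and>
      {w \<in> V. E u w \<and> w \<notin> C} = {v} \<and> C' = insert v C)"

definition zero_forcing_set :: "'a set \<Rightarrow> ('a \<Rightarrow> 'a \<Rightarrow> bool) \<Rightarrow> 'a set \<Rightarrow> bool" where
  "zero_forcing_set V E S \<longleftrightarrow> S \<subseteq> V \<and> (force_step V E)\<^sup>*\<^sup>* S V"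

definition connected_forcing_set :: "'a set \<Rightarrow> ('a \<Rightarrow> 'a \<Rightarrow> bool) \<Rightarrow> 'a set \<Rightarrow> bool" where
  "connected_forcing_set V E S \<longleftrightarrow> zero_forcing_set V E S \<and> connected_on S E"

definition Zc :: "'a set \<Rightarrow> ('a \<Rightarrow> 'a \<Rightarrow> bool) \<Rightarrow> nat" where
  "Zc V E = (LEAST k. \<exists>S. connected_forcing_set V E S \<and> card S = k)"

end

theory Submission
  imports Defs
begin

lemma fs_mono: "(force_step V E)\<^sup>*\<^sup>* C D \<Longrightarrow> C \<subseteq> D"
  by (induction rule: rtranclp_induct) (auto simp: force_step_def)

lemma fs_remove:
  assumes "(force_step V E)\<^sup>*\<^sup>* C D" "u \<in> C" "\<forall>w. E u w \<longrightarrow> w \<in> C"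
  shows "(force_step (V - {u}) (\<lambda>a b. E a b \<and> a \<noteq> u \<and> b \<noteq> u))\<^sup>*\<^sup>* (C - {u}) (D - {u})"
  using assms(1)
proof (induction rule: rtranclp_induct)
  case base
  then show ?case by simp
next
  case (step y z)
  have Cy: "C \<subseteq> y" using step.hyps(1) by (rule fs_mono)
  from step.hyps(2) obtain w x where
    h: "w \<in> y" "x \<in> V" "x \<notin> y" "E w x" "{t \<in> V. E w t \<and> t \<notin> y} = {x}" "z = insert x y"
    unfolding force_step_def by blast
  have wu: "w \<noteq> u" using h(3,4) assms(3) Cy by blast
  have xu: "x \<noteq> u" using h(3) assms(2) Cy by blast
  have st: "{t \<in> V - {u}. (E w t \<and> w \<noteq> u \<and> t \<noteq> u) \<and> t \<notin> y - {u}} = {x}"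
  proof -
    have "{t \<in> V - {u}. (E w t \<and> w \<noteq> u \<and> t \<noteq> u) \<and> t \<notin> y - {u}}
        = {t \<in> V. E w t \<and> t \<notin> y}" using wu assms(2) Cy by auto
    then show ?thesis using h(5) by simp
  qed
  have c1: "w \<in> y - {u}" using h(1) wu by blast
  have c2: "x \<in> V - {u}" using h(2) xu by blast
  have c3: "x \<notin> y - {u}" using h(3) by blast
  have c4: "E w x \<and> w \<noteq> u \<and> x \<noteq> u" using h(4) wu xu by blast
  have c6: "z - {u} = insert x (y - {u})" using h(6) xu by blast
  have "force_step (V - {u}) (\<lambda>a b. E a b \<and> a \<noteq> u \<and> b \<noteq> u) (y - {u}) (z - {u})"
    unfolding force_step_def using c1 c2 c3 c4 st c6 by blast
  with step.IH show ?case by (rule rtranclp.rtrancl_into_rtrancl)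
qed

definition eset :: "('a \<Rightarrow> 'a \<Rightarrow> bool) \<Rightarrow> 'a set set" where
  "eset E = {{u, v} | u v. E u v}"

lemma eset_sub: "simple_graph V E \<Longrightarrow> eset E \<subseteq> (\<lambda>(a,b). {a,b}) ` (V \<times> V)"
proof
  fix e assume g: "simple_graph V E" and "e \<in> eset E"
  then obtain a b where e: "e = {a,b}" "E a b" unfolding eset_def by blast
  have ab: "(a,b) \<in> V \<times> V" using g e(2) unfolding simple_graph_def by blast
  then show "e \<in> (\<lambda>(a,b). {a,b}) ` (V \<times> V)" using rev_image_eqI[OF ab, of e "\<lambda>(a,b). {a,b}"] e(1) by simp
qed

lemma eset_finite: "simple_graph V E \<Longrightarrow> finite (eset E)"
  using eset_sub[of V E] finite_subset[OF _ finite_imageI[OF finite_cartesian_product]]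
  unfolding simple_graph_def by metis

lemma eset_card: "simple_graph V E \<Longrightarrow> card (eset E) \<le> card V * card V"
proof -
  assume g: "simple_graph V E"
  have f: "finite V" using g simple_graph_def by blast
  have "card (eset E) \<le> card ((\<lambda>(a,b). {a,b}) ` (V \<times> V))"
    by (rule card_mono[OF finite_imageI[OF finite_cartesian_product[OF f f]] eset_sub[OF g]])
  also have "\<dots> \<le> card (V \<times> V)" by (rule card_image_le[OF finite_cartesian_product[OF f f]])
  also have "\<dots> = card V * card V" by (simp add: card_cartesian_product)
  finally show ?thesis .
qed

lemma card_swap: "finite S \<Longrightarrow> u \<in> S \<Longrightarrow> v \<notin> S \<Longrightarrow> card (insert v (S - {u})) = card S"
proof -
  assume a: "finite S" "u \<in> S" "v \<notin> S"
  have "card S > 0" using a card_gt_0_iff by blast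
  moreover have "card (insert v (S - {u})) = Suc (card (S - {u}))" using a by simp
  ultimately show ?thesis using a by (simp add: card_Diff_singleton)
qed

lemma main_bound:
  assumes "simple_graph V E" "S \<subseteq> V" "(force_step V E)\<^sup>*\<^sup>* S V"
  shows "card (eset E) \<le> card S * card V"
  using assms
proof (induction "card V" arbitrary: V E S rule: less_induct)
  case less
  have f: "finite V" using less.prems(1) simple_graph_def by blast
  show ?case
  proof (cases "S = V")
    case True
    then show ?thesis using eset_card[OF less.prems(1)] by simp
  next
    case False
    from less.prems(3) False obtain C1 where s1: "force_step V E S C1"
      and r1: "(force_step V E)\<^sup>*\<^sup>* C1 V"
      by (metis converse_rtranclpE)
    from s1 obtain u v where
      h: "u \<in> S" "v \<in> V" "v \<notin> S" "E u v" "{t \<in> V. E u t \<and> t \<notin> S} = {v}" "C1 = insert v S"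
      unfolding force_step_def by blast
    have nb: "\<forall>w. E u w \<longrightarrow> w \<in> C1" using h(5,6) less.prems(1)
      unfolding simple_graph_def by blast
    define E' where "E' = (\<lambda>a b. E a b \<and> a \<noteq> u \<and> b \<noteq> u)"
    have r2: "(force_step (V - {u}) E')\<^sup>*\<^sup>* (C1 - {u}) (V - {u})"
      unfolding E'_def using fs_remove[OF r1 _ nb] h by auto
    have g': "simple_graph (V - {u}) E'"
      using less.prems(1) unfolding simple_graph_def E'_def by auto
    have uV: "u \<in> V" using h(1) less.prems(2) by blast
    have cV: "card (V - {u}) < card V" using f uV by (rule card_Diff1_less)
    have IH: "card (eset E') \<le> card (C1 - {u}) * card (V - {u})"
      using less.hyps[OF cV g' _ r2] h less.prems(2) by auto
    have cC: "card (C1 - {u}) = card S"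
    proof -
      have fS: "finite S" using f less.prems(2) finite_subset by blast
      have "v \<noteq> u" using h(1,3) by blast
      then have "C1 - {u} = insert v (S - {u})" using h(6) by auto
      then show ?thesis using fS h(1,3) card_swap by metis
    qed
    have nbs: "{w. E u w} \<subseteq> insert v (S - {u})"
      using h(5) less.prems(1) unfolding simple_graph_def by blast
    have fS: "finite S" using f less.prems(2) finite_subset by blast
    have cN: "card {w. E u w} \<le> card S"
    proof -
      have "card {w. E u w} \<le> card (insert v (S - {u}))"
        using nbs fS by (intro card_mono) auto
      also have "\<dots> = card S" using fS h(1,3) card_swap by metis
      finally show ?thesis .
    qed
    have dec: "eset E \<subseteq> eset E' \<union> (\<lambda>w. {u,w}) ` {w. E u w}"
    proof
      fix e assume "e \<in> eset E"
      then obtain a b where e: "e = {a,b}" "E a b" unfolding eset_def by blast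
      show "e \<in> eset E' \<union> (\<lambda>w. {u,w}) ` {w. E u w}"
      proof (cases "a = u \<or> b = u")
        case True
        then show ?thesis
        proof
          assume "a = u" then show ?thesis using e by blast
        next
          assume "b = u"
          then have "E u a" using e(2) less.prems(1) unfolding simple_graph_def by blast
          then show ?thesis using e \<open>b = u\<close> by (auto simp: insert_commute)
        qed
      next
        case False
        then show ?thesis using e unfolding eset_def E'_def by blast
      qed
    qed
    have fE': "finite (eset E')" by (rule eset_finite[OF g'])
    have fN: "finite {w. E u w}" using nbs fS finite_subset by blast
    have "card (eset E) \<le> card (eset E' \<union> (\<lambda>w. {u,w}) ` {w. E u w})"
      using dec fE' fN by (intro card_mono) auto
    also have "\<dots> \<le> card (eset E') + card ((\<lambda>w. {u,w}) ` {w. E u w})" by (rule card_Un_le)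
    also have "\<dots> \<le> card S * card (V - {u}) + card S"
      using IH cC card_image_le[OF fN, of "\<lambda>w. {u,w}"] cN by simp
    also have "\<dots> = card S * card V" using cV
      by (metis Suc_diff_1 card_Diff_singleton f uV card_gt_0_iff empty_iff mult_Suc_right add.commute)
    finally show ?thesis .
  qed
qed

theorem theorem1:
  shows "\<forall>c::real. c > 0 \<longrightarrow> (\<exists>c'::real. c' > 0 \<and>
     (\<forall>(V::nat set) E. simple_graph V E \<and> connected_graph V E \<and>
        real (num_edges E) \<ge> c * (real (card V))\<^sup>2 \<longrightarrow>
        c' * real (card V) \<le> real (Zc V E) \<and> Zc V E \<le> card V))"
proof (intro allI impI)
  fix c :: real assume c: "c > 0"
  show "\<exists>c'::real. c' > 0 \<and>
     (\<forall>(V::nat set) E. simple_graph V E \<and> connected_graph V E \<and>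
        real (num_edges E) \<ge> c * (real (card V))\<^sup>2 \<longrightarrow>
        c' * real (card V) \<le> real (Zc V E) \<and> Zc V E \<le> card V)"
  proof (intro exI[of _ c] conjI c allI impI)
    fix V :: "nat set" and E
    assume a: "simple_graph V E \<and> connected_graph V E \<and> real (num_edges E) \<ge> c * (real (card V))\<^sup>2"
    have cfV: "connected_forcing_set V E V"
      using a unfolding connected_forcing_set_def zero_forcing_set_def connected_graph_def by auto
    have ex: "\<exists>S. connected_forcing_set V E S \<and> card S = card V" using cfV by blast
    show "Zc V E \<le> card V" unfolding Zc_def by (rule Least_le) (rule ex)
    obtain S where S: "connected_forcing_set V E S" "card S = Zc V E"
      using LeastI_ex[of "\<lambda>k. \<exists>S. connected_forcing_set V E S \<and> card S = k"] ex
      unfolding Zc_def by blast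
    have b: "card (eset E) \<le> card S * card V"
      using main_bound[of V E S] a S(1)
      unfolding connected_forcing_set_def zero_forcing_set_def by blast
    have ne: "num_edges E = card (eset E)" by (simp add: num_edges_def eset_def)
    have "c * real (card V) * real (card V) \<le> real (Zc V E) * real (card V)"
      using a b ne S(2) by (simp add: power2_eq_square mult.assoc)
        (metis of_nat_le_iff of_nat_mult order_trans)
    moreover have "card V > 0"
      using a unfolding connected_graph_def connected_on_def simple_graph_def
      by (simp add: card_gt_0_iff)
    ultimately show "c * real (card V) \<le> real (Zc V E)" by simp
  qed
qed

end
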